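(* Let $(L,\vee,\wedge,0,1)$ be a complemented modular lattice with $0\neq1$, let $a\in L$ and let $A$ be a non-empty subset of $L$. Then $(a^+,\le)$, $(A^+,\le)$ and $(a^{++},\le)$ are antichains.
   Context: For $a\in L$, $a^+:=\{x\in L\mid a\vee x=1,\ a\wedge x=0\}$ (the set of all complements of $a$). For $A\subseteq L$, $A^+:=\{x\in L\mid a\vee x=1\text{ and }a\wedge x=0\text{ for all }a\in A\}$, and $a^{++}:=(a^+)^+$. *)

theory Defs
  imports Main
begin

definition modular_lattice :: "'a::lattice itself \<Rightarrow> bool" where
  "modular_lattice _ \<longleftrightarrow> (\<forall>x y z::'a. x \<le> z \<longrightarrow> sup x (inf y z) = inf (sup x y) z)"

definition complemented_lattice :: "'a::bounded_lattice itself \<Rightarrow> bool" where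
  "complemented_lattice _ \<longleftrightarrow> (\<forall>x::'a. \<exists>y. sup x y = top \<and> inf x y = bot)"

definition compls :: "'a::bounded_lattice \<Rightarrow> 'a set" where
  "compls a = {x. sup a x = top \<and> inf a x = bot}"

definition compls_set :: "'a::bounded_lattice set \<Rightarrow> 'a set" where
  "compls_set A = {x. \<forall>a\<in>A. sup a x = top \<and> inf a x = bot}"

definition antichain_on :: "'a::order set \<Rightarrow> bool" where
  "antichain_on S \<longleftrightarrow> (\<forall>x\<in>S. \<forall>y\<in>S. x \<le> y \<longrightarrow> x = y)"

end

theory Submission
  imports Defs
begin

lemma compl_antichain:
  fixes b :: "'a::bounded_lattice"
  assumes m: "modular_lattice TYPE('a)" and S: "S \<subseteq> compls b"
  shows "antichain_on S"
  unfolding antichain_on_def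
proof (intro ballI impI)
  fix x y assume x: "x \<in> S" and y: "y \<in> S" and xy: "x \<le> y"
  have cx: "sup b x = top" "inf b x = bot" using x S by (auto simp: compls_def)
  have cy: "sup b y = top" "inf b y = bot" using y S by (auto simp: compls_def)
  have "sup x (inf b y) = inf (sup x b) y"
    using m xy unfolding modular_lattice_def by blast
  also have "sup x b = top" using cx by (simp add: sup_commute)
  finally have "x = y" using cy by simp
  thus "x = y" .
qed

theorem corollary1:
  fixes a :: "'a::bounded_lattice" and A :: "'a set"
  assumes "modular_lattice TYPE('a)"
    and "complemented_lattice TYPE('a)"
    and "(bot::'a) \<noteq> top"
    and "A \<noteq> {}"
  shows "antichain_on (compls a) \<and> antichain_on (compls_set A)
         \<and> antichain_on (compls_set (compls a))"
proof -
  have 1: "antichain_on (compls a)" using compl_antichain[OF assms(1)] by blast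
  obtain a0 where a0: "a0 \<in> A" using assms(4) by blast
  have "compls_set A \<subseteq> compls a0" using a0 by (auto simp: compls_set_def compls_def)
  hence 2: "antichain_on (compls_set A)" using compl_antichain[OF assms(1)] by blast
  obtain c where "sup a c = top \<and> inf a c = bot"
    using assms(2) unfolding complemented_lattice_def by blast
  hence c: "c \<in> compls a" by (simp add: compls_def)
  have "compls_set (compls a) \<subseteq> compls c" using c by (auto simp: compls_set_def compls_def)
  hence 3: "antichain_on (compls_set (compls a))" using compl_antichain[OF assms(1)] by blast
  show ?thesis using 1 2 3 by blast
qed

end
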